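(* Let $\mathcal{A}$ be a Desargues affine plane, let $O\neq I$ be points, and let $\delta$ be a dilatation of $\mathcal{A}$ having a fixed point (which may lie on the line $\ell^{OI}$ or off it). Equip $\ell^{OI}$ with the skew field structure with zero $O$ and unit $I$, and the line $\delta(\ell^{OI})$ with the skew field structure with zero $\delta(O)$ and unit $\delta(I)$. Then for all $A,B\in\ell^{OI}$ with $B\neq O$, \[ \delta(r(A:B))=r(\delta(A):\delta(B)), \] where the ratio on the left is computed in $\ell^{OI}$ and the ratio on the right in $\delta(\ell^{OI})$.
   Context: A Desargues affine plane is an incidence structure of points and lines in which any two distinct points lie on exactly one line, through a point not on a line $\ell$ there is exactly one line disjoint from $\ell$ (Playfair), there exist three non-collinear points, and Desargues' axiom holds: if $A,B,C,A',B',C'$ are points such that the pairwise distinct lines $AA',BB',CC'$ are either all parallel or all pass through one point, and $AB\parallel A'B'$, $BC\parallel B'C'$ (with $AB\neq A'B'$, $BC\neq B'C'$, $A\ne C$, $A'\ne C'$), then $AC\parallel A'C'$. Skew field on a line: for distinct points $O,I$ and points $A,B$ on the line $\ell^{OI}$, addition is defined by: choose a point $B_1\notin\ell^{OI}$; let $P_1$ be the intersection of the line through $B_1$ parallel to $\ell^{OI}$ with the line through $A$ parallel to $OB_1$; then $A+B$ is the intersection of $\ell^{OI}$ with the line through $P_1$ parallel to $BB_1$. Multiplication is defined by: choose $B_1\notin\ell^{OI}$; let $P_1$ be the intersection of the line through $A$ parallel to $IB_1$ with the line $OB_1$; then $A\cdot B$ is the intersection of $\ell^{OI}$ with the line through $P_1$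 parallel to $BB_1$. These operations do not depend on the choice of $B_1$ and make $(\ell^{OI},+,\cdot)$ a skew field with zero $O$ and unit $I$; the same construction applies to any line with any chosen pair of distinct points as zero and unit. $X^{-1}$ denotes the multiplicative inverse. Ratio of two points on a line with chosen zero $O$: $r(A:B)=B^{-1}A$ for $B\neq O$. A dilatation of $\mathcal{A}$ is a collineation $\delta$ such that $\delta(P)\delta(Q)\parallel PQ$ for all points $P\neq Q$. *)

theory Defs
  imports Main
begin

definition line_of :: "'a set set \<Rightarrow> 'a \<Rightarrow> 'a \<Rightarrow> 'a set" where
  "line_of L A B = (THE l. l \<in> L \<and> A \<in> l \<and> B \<in> l)"

definition parallel :: "'a set \<Rightarrow> 'a set \<Rightarrow> bool" where
  "parallel l m \<longleftrightarrow> l = m \<or> l \<inter> m = {}"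

definition collinear :: "'a set set \<Rightarrow> 'a \<Rightarrow> 'a \<Rightarrow> 'a \<Rightarrow> bool" where
  "collinear L A B C \<longleftrightarrow> (\<exists>l\<in>L. A \<in> l \<and> B \<in> l \<and> C \<in> l)"

definition par_through :: "'a set set \<Rightarrow> 'a \<Rightarrow> 'a set \<Rightarrow> 'a set" where
  "par_through L P l = (THE m. m \<in> L \<and> P \<in> m \<and> parallel m l)"

definition meet :: "'a set \<Rightarrow> 'a set \<Rightarrow> 'a" where
  "meet l m = (THE X. X \<in> l \<and> X \<in> m)"

definition affine_plane :: "'a set set \<Rightarrow> bool" where
  "affine_plane L \<longleftrightarrow>
     (\<forall>A B. A \<noteq> B \<longrightarrow> (\<exists>!l. l \<in> L \<and> A \<in> l \<and> B \<in> l)) \<and>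
     (\<forall>l\<in>L. \<forall>P. P \<notin> l \<longrightarrow> (\<exists>!m. m \<in> L \<and> P \<in> m \<and> m \<inter> l = {})) \<and>
     (\<exists>A B C. \<not> collinear L A B C)"

definition desargues_axiom :: "'a set set \<Rightarrow> bool" where
  "desargues_axiom L \<longleftrightarrow>
     (\<forall>A B C A' B' C'.
        A \<noteq> A' \<and> B \<noteq> B' \<and> C \<noteq> C' \<and> A \<noteq> B \<and> B \<noteq> C \<and> A \<noteq> C \<and>
        A' \<noteq> B' \<and> B' \<noteq> C' \<and> A' \<noteq> C' \<and>
        line_of L A A' \<noteq> line_of L B B' \<and> line_of L B B' \<noteq> line_of L C C' \<and>
        line_of L A A' \<noteq> line_of L C C' \<and>
        ((parallel (line_of L A A') (line_of L B B') \<and>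
          parallel (line_of L B B') (line_of L C C') \<and>
          parallel (line_of L A A') (line_of L C C')) \<or>
         (\<exists>P. P \<in> line_of L A A' \<and> P \<in> line_of L B B' \<and> P \<in> line_of L C C')) \<and>
        parallel (line_of L A B) (line_of L A' B') \<and>
        parallel (line_of L B C) (line_of L B' C') \<and>
        line_of L A B \<noteq> line_of L A' B' \<and> line_of L B C \<noteq> line_of L B' C'
      \<longrightarrow> parallel (line_of L A C) (line_of L A' C'))"

definition desargues_affine_plane :: "'a set set \<Rightarrow> bool" where
  "desargues_affine_plane L \<longleftrightarrow> affine_plane L \<and> desargues_axiom L"

text \<open>Skew field operations on the line OI (zero Oz, unit Iu), using an auxiliary
  point B1 off the line (the result does not depend on the choice).\<close>

definition aux_pt :: "'a set set \<Rightarrow> 'a \<Rightarrow> 'a \<Rightarrow> 'a" where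
  "aux_pt L Oz Iu = (SOME B1. B1 \<notin> line_of L Oz Iu)"

definition sf_add :: "'a set set \<Rightarrow> 'a \<Rightarrow> 'a \<Rightarrow> 'a \<Rightarrow> 'a \<Rightarrow> 'a" where
  "sf_add L Oz Iu A B =
     (let l = line_of L Oz Iu; B1 = aux_pt L Oz Iu;
          P1 = meet (par_through L B1 l) (par_through L A (line_of L Oz B1))
      in meet l (par_through L P1 (line_of L B B1)))"

definition sf_mult :: "'a set set \<Rightarrow> 'a \<Rightarrow> 'a \<Rightarrow> 'a \<Rightarrow> 'a \<Rightarrow> 'a" where
  "sf_mult L Oz Iu A B =
     (let l = line_of L Oz Iu; B1 = aux_pt L Oz Iu;
          P1 = meet (par_through L A (line_of L Iu B1)) (line_of L Oz B1)
      in meet l (par_through L P1 (line_of L B B1)))"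

definition sf_inv :: "'a set set \<Rightarrow> 'a \<Rightarrow> 'a \<Rightarrow> 'a \<Rightarrow> 'a" where
  "sf_inv L Oz Iu X = (THE Y. Y \<in> line_of L Oz Iu \<and> sf_mult L Oz Iu X Y = Iu \<and> sf_mult L Oz Iu Y X = Iu)"

definition ratio :: "'a set set \<Rightarrow> 'a \<Rightarrow> 'a \<Rightarrow> 'a \<Rightarrow> 'a \<Rightarrow> 'a" where
  "ratio L Oz Iu A B = sf_mult L Oz Iu (sf_inv L Oz Iu B) A"

definition collineation :: "'a set set \<Rightarrow> ('a \<Rightarrow> 'a) \<Rightarrow> bool" where
  "collineation L f \<longleftrightarrow> bij f \<and> (\<forall>l. l \<in> L \<longleftrightarrow> f ` l \<in> L)"

definition dilatation :: "'a set set \<Rightarrow> ('a \<Rightarrow> 'a) \<Rightarrow> bool" where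
  "dilatation L f \<longleftrightarrow> collineation L f \<and>
     (\<forall>P Q. P \<noteq> Q \<longrightarrow> parallel (line_of L (f P) (f Q)) (line_of L P Q))"

end

theory Submission
  imports Defs
begin



locale aff = fixes L :: "'a set set" assumes ap: "affine_plane L"
begin

lemma ap1: "\<forall>A B. A \<noteq> B \<longrightarrow> (\<exists>!l. l \<in> L \<and> A \<in> l \<and> B \<in> l)"
  using ap unfolding affine_plane_def by (rule conjunct1)
lemma ap2: "\<forall>l\<in>L. \<forall>P. P \<notin> l \<longrightarrow> (\<exists>!m. m \<in> L \<and> P \<in> m \<and> m \<inter> l = {})"
  using ap unfolding affine_plane_def by (rule conjunct1[OF conjunct2])
lemma ap3: "\<exists>A B C. \<not> collinear L A B C"
  using ap unfolding affine_plane_def by (rule conjunct2[OF conjunct2])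

lemma uniq_line: "A \<noteq> B \<Longrightarrow> \<exists>!l. l \<in> L \<and> A \<in> l \<and> B \<in> l"
  using ap1 by blast

lemma line_of: assumes "A \<noteq> B"
  shows "line_of L A B \<in> L" "A \<in> line_of L A B" "B \<in> line_of L A B"
  using theI'[OF uniq_line[OF assms]] unfolding line_of_def by auto

lemma line_of_eq: "A \<noteq> B \<Longrightarrow> l \<in> L \<Longrightarrow> A \<in> l \<Longrightarrow> B \<in> l \<Longrightarrow> line_of L A B = l"
  unfolding line_of_def by (rule the1_equality[OF uniq_line]) auto

lemma lines_eq: "l \<in> L \<Longrightarrow> m \<in> L \<Longrightarrow> A \<noteq> B \<Longrightarrow> A \<in> l \<Longrightarrow> B \<in> l \<Longrightarrow> A \<in> m \<Longrightarrow> B \<in> m \<Longrightarrow> l = m"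
  using uniq_line by blast

lemma line_of_sym: "line_of L A B = line_of L B A"
  unfolding line_of_def by metis

lemma par_unique: assumes "l \<in> L" shows "\<exists>!m. m \<in> L \<and> P \<in> m \<and> parallel m l"
proof (cases "P \<in> l")
  case True
  then show ?thesis using assms unfolding parallel_def by blast
next
  case False
  have ex: "\<exists>!m. m \<in> L \<and> P \<in> m \<and> m \<inter> l = {}" using ap2 assms False by blast
  then obtain m where m: "m \<in> L" "P \<in> m" "m \<inter> l = {}" by blast
  show ?thesis
  proof (rule ex1I[of _ m])
    show "m \<in> L \<and> P \<in> m \<and> parallel m l" using m unfolding parallel_def by auto
    fix m' assume "m' \<in> L \<and> P \<in> m' \<and> parallel m' l"
    then have "m' \<inter> l = {}" using False unfolding parallel_def by blast
    with ex m \<open>m' \<in> L \<and> P \<in> m' \<and> parallel m' l\<close> show "m' = m" by blast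
  qed
qed

lemma par_through: assumes "l \<in> L"
  shows "par_through L P l \<in> L" "P \<in> par_through L P l" "parallel (par_through L P l) l"
  using theI'[OF par_unique[OF assms]] unfolding par_through_def by auto

lemma par_eq: "l \<in> L \<Longrightarrow> m \<in> L \<Longrightarrow> P \<in> m \<Longrightarrow> parallel m l \<Longrightarrow> par_through L P l = m"
  unfolding par_through_def by (rule the1_equality[OF par_unique]) auto

lemma par_self: "l \<in> L \<Longrightarrow> P \<in> l \<Longrightarrow> par_through L P l = l"
  by (rule par_eq) (auto simp: parallel_def)

lemma parallel_sym: "parallel l m \<Longrightarrow> parallel m l"
  unfolding parallel_def by auto

lemma parallel_refl: "parallel l l"
  unfolding parallel_def by auto

lemma parallel_trans: assumes "l \<in> L" "m \<in> L" "n \<in> L" "parallel l m" "parallel m n"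
  shows "parallel l n"
proof (rule ccontr)
  assume "\<not> parallel l n"
  then obtain X where X: "X \<in> l" "X \<in> n" "l \<noteq> n" unfolding parallel_def by auto
  have "par_through L X m = l" using assms X by (intro par_eq) auto
  moreover have "par_through L X m = n" using assms X by (intro par_eq) (auto intro: parallel_sym)
  ultimately show False using X by simp
qed

lemma meet_eq: "l \<in> L \<Longrightarrow> m \<in> L \<Longrightarrow> l \<noteq> m \<Longrightarrow> X \<in> l \<Longrightarrow> X \<in> m \<Longrightarrow> meet l m = X"
  unfolding meet_def by (rule the_equality) (auto dest: lines_eq)

lemma nonpar_meet: assumes "l \<in> L" "m \<in> L" "\<not> parallel l m"
  shows "meet l m \<in> l" "meet l m \<in> m"
proof -
  obtain X where "X \<in> l" "X \<in> m" "l \<noteq> m" using assms unfolding parallel_def by auto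
  then have "meet l m = X" using assms meet_eq by auto
  then show "meet l m \<in> l" "meet l m \<in> m" using \<open>X \<in> l\<close> \<open>X \<in> m\<close> by auto
qed

lemma nonpar_I: "l \<noteq> m \<Longrightarrow> X \<in> l \<Longrightarrow> X \<in> m \<Longrightarrow> \<not> parallel l m"
  unfolding parallel_def by auto

lemma nonpar_trans: assumes "l \<in> L" "m \<in> L" "l' \<in> L" "m' \<in> L" "\<not> parallel l m"
  "parallel l' l" "parallel m' m" shows "\<not> parallel l' m'"
  using assms parallel_trans parallel_sym by metis

lemma off_line_ex: "\<exists>P. P \<notin> l" if "l \<in> L"
  using ap3 unfolding collinear_def using that by blast

end



definition pp :: "'a set set \<Rightarrow> 'a \<Rightarrow> 'a \<Rightarrow> 'a \<Rightarrow> 'a \<Rightarrow> 'a" where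
  "pp L Z U C A = meet (par_through L A (line_of L U C)) (line_of L Z C)"

definition G :: "'a set set \<Rightarrow> 'a \<Rightarrow> 'a \<Rightarrow> 'a \<Rightarrow> 'a \<Rightarrow> 'a \<Rightarrow> 'a" where
  "G L Z U C A B = meet (line_of L Z U) (par_through L (pp L Z U C A) (line_of L B C))"

lemma sf_mult_G: "sf_mult L Z U A B = G L Z U (aux_pt L Z U) A B"
  by (simp add: sf_mult_def G_def pp_def Let_def)

locale ln = aff L for L :: "'a set set" + fixes Z U :: 'a assumes ZU: "Z \<noteq> U"
begin

abbreviation "ll \<equiv> line_of L Z U"

lemma ll: "ll \<in> L" "Z \<in> ll" "U \<in> ll" using line_of[OF ZU] by auto

lemma nonpar_par1: "\<not> parallel l m \<Longrightarrow> l \<in> L \<Longrightarrow> m \<in> L \<Longrightarrow> \<not> parallel (par_through L P l) m"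
  using nonpar_trans[of l m "par_through L P l" m] par_through[of l P] parallel_refl by blast

lemma offC: "C \<notin> ll \<Longrightarrow> X \<in> ll \<Longrightarrow> X \<noteq> C" by auto

lemma XC: assumes "C \<notin> ll" "X \<in> ll"
  shows "line_of L X C \<in> L" "X \<in> line_of L X C" "C \<in> line_of L X C" "line_of L X C \<noteq> ll"
    "\<not> parallel (line_of L X C) ll" "Y \<in> ll \<Longrightarrow> Y \<in> line_of L X C \<Longrightarrow> Y = X"
proof -
  have ne: "X \<noteq> C" using assms by auto
  show 1: "line_of L X C \<in> L" "X \<in> line_of L X C" "C \<in> line_of L X C" using line_of[OF ne] by auto
  show 2: "line_of L X C \<noteq> ll" using 1 assms by auto
  show "\<not> parallel (line_of L X C) ll" using 1 2 assms by (intro nonpar_I) auto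
  show "Y \<in> ll \<Longrightarrow> Y \<in> line_of L X C \<Longrightarrow> Y = X" using 1 2 assms ll lines_eq by metis
qed

lemma ZC_UC: assumes "C \<notin> ll" shows "line_of L Z C \<noteq> line_of L U C"
  "\<not> parallel (line_of L U C) (line_of L Z C)"
proof -
  show ne: "line_of L Z C \<noteq> line_of L U C" using XC[OF assms ll(2)] XC[OF assms ll(3)] ZU ll by metis
  show "\<not> parallel (line_of L U C) (line_of L Z C)" using ne XC[OF assms ll(2)] XC[OF assms ll(3)]
    by (intro nonpar_I[of _ _ C]) auto
qed

lemma pp: assumes C: "C \<notin> ll" and A: "A \<in> ll"
  shows "pp L Z U C A \<in> par_through L A (line_of L U C)" "pp L Z U C A \<in> line_of L Z C"
proof -
  have n: "\<not> parallel (par_through L A (line_of L U C)) (line_of L Z C)"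
    using ZC_UC(2)[OF C] XC(1)[OF C ll(3)] XC(1)[OF C ll(2)] by (rule nonpar_par1)
  show "pp L Z U C A \<in> par_through L A (line_of L U C)" "pp L Z U C A \<in> line_of L Z C"
    unfolding pp_def using nonpar_meet[OF par_through(1)[OF XC(1)[OF C ll(3)]] XC(1)[OF C ll(2)] n] by auto
qed

lemma pp_Z: assumes C: "C \<notin> ll" shows "pp L Z U C Z = Z"
proof -
  have n: "\<not> parallel (par_through L Z (line_of L U C)) (line_of L Z C)"
    using ZC_UC(2)[OF C] XC(1)[OF C ll(3)] XC(1)[OF C ll(2)] by (rule nonpar_par1)
  show ?thesis unfolding pp_def using n XC(1-3)[OF C ll(2)] par_through[OF XC(1)[OF C ll(3)], of Z]
    by (intro meet_eq) (auto simp: parallel_def)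
qed

lemma pp_U: assumes C: "C \<notin> ll" shows "pp L Z U C U = C"
  unfolding pp_def using ZC_UC[OF C] XC[OF C ll(2)] XC[OF C ll(3)]
  by (subst par_self) (auto intro!: meet_eq)

lemma pp_nZ: assumes C: "C \<notin> ll" and A: "A \<in> ll" "A \<noteq> Z"
  shows "pp L Z U C A \<noteq> Z" "pp L Z U C A \<notin> ll" "A \<noteq> pp L Z U C A"
    "line_of L A (pp L Z U C A) = par_through L A (line_of L U C)"
proof -
  note p = pp[OF C A(1)]
  note pt = par_through[OF XC(1)[OF C ll(3)], of A]
  show 1: "pp L Z U C A \<noteq> Z"
  proof
    assume "pp L Z U C A = Z"
    then have "par_through L A (line_of L U C) = ll" using p pt ll A
      by (intro lines_eq[of _ _ A Z]) auto
    then show False using pt XC(5)[OF C ll(3)] parallel_sym by metis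
  qed
  show 2: "pp L Z U C A \<notin> ll" using 1 p XC(6)[OF C ll(2)] by blast
  show "A \<noteq> pp L Z U C A" using 2 A by auto
  then show "line_of L A (pp L Z U C A) = par_through L A (line_of L U C)"
    using p pt by (intro line_of_eq) auto
qed

lemma pp_nU: assumes C: "C \<notin> ll" and A: "A \<in> ll" "A \<noteq> U"
  shows "pp L Z U C A \<noteq> C"
proof
  assume h: "pp L Z U C A = C"
  note p = pp[OF C A(1)]
  note pt = par_through[OF XC(1)[OF C ll(3)], of A]
  have "par_through L A (line_of L U C) = line_of L U C"
    using p h pt XC(3)[OF C ll(3)] unfolding parallel_def by auto
  then have "A \<in> line_of L U C" using pt by metis
  then show False using XC(6)[OF C ll(3)] A by blast
qed

lemma G_mem: assumes C: "C \<notin> ll" and B: "B \<in> ll"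
  shows "meet ll (par_through L Q (line_of L B C)) \<in> ll"
    "meet ll (par_through L Q (line_of L B C)) \<in> par_through L Q (line_of L B C)"
proof -
  have n: "\<not> parallel ll (par_through L Q (line_of L B C))"
    using XC[OF C B] par_through[OF XC(1)[OF C B], of Q] ll parallel_sym
    by (metis nonpar_trans parallel_refl)
  show "meet ll (par_through L Q (line_of L B C)) \<in> ll"
    "meet ll (par_through L Q (line_of L B C)) \<in> par_through L Q (line_of L B C)"
    using nonpar_meet[OF ll(1) _ n] par_through[OF XC(1)[OF C B], of Q] by auto
qed

end



locale col = aff + fixes f assumes col: "collineation L f"
begin

lemma injf: "inj f" using col unfolding collineation_def bij_def by auto
lemma fL: "l \<in> L \<Longrightarrow> f ` l \<in> L" using col unfolding collineation_def by auto

lemma f_line: assumes "P \<noteq> Q" shows "f ` line_of L P Q = line_of L (f P) (f Q)"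
proof -
  have "f P \<noteq> f Q" using injf assms by (auto dest: injD)
  then show ?thesis using line_of[OF assms] fL by (intro line_of_eq[symmetric]) auto
qed

lemma f_parallel: "parallel m l \<Longrightarrow> parallel (f ` m) (f ` l)"
  unfolding parallel_def using image_Int[OF injf, of m l] by auto

lemma f_par: assumes "l \<in> L" shows "f ` par_through L P l = par_through L (f P) (f ` l)"
  using par_through[OF assms, of P] fL assms f_parallel by (intro par_eq[symmetric]) auto

lemma f_meet: assumes "l \<in> L" "m \<in> L" "\<not> parallel l m"
  shows "f (meet l m) = meet (f ` l) (f ` m)"
proof -
  obtain X where X: "X \<in> l" "X \<in> m" "l \<noteq> m" using assms unfolding parallel_def by auto
  have ne: "f ` l \<noteq> f ` m" using X injf by (simp add: inj_image_eq_iff)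
  have "meet l m = X" using meet_eq assms X by auto
  moreover have "meet (f ` l) (f ` m) = f X" using meet_eq[of "f ` l" "f ` m" "f X"] fL assms X ne by auto
  ultimately show ?thesis by simp
qed

end

locale lncol = ln L Z U + col L f for L :: "'a set set" and Z U :: 'a and f
begin

lemma fZU: "f Z \<noteq> f U" using injf ZU by (auto dest: injD)

lemma f_ll: "f ` ll = line_of L (f Z) (f U)" using f_line[OF ZU] .

lemma f_G: assumes C: "C \<notin> ll" and A: "A \<in> ll" and B: "B \<in> ll"
  shows "f (G L Z U C A B) = G L (f Z) (f U) (f C) (f A) (f B)"
proof -
  have n1: "\<not> parallel (par_through L A (line_of L U C)) (line_of L Z C)"
    using ZC_UC(2)[OF C] XC(1)[OF C ll(3)] XC(1)[OF C ll(2)] by (rule nonpar_par1)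
  have e1: "f (pp L Z U C A) = pp L (f Z) (f U) (f C) (f A)"
    unfolding pp_def
    using f_meet[OF par_through(1)[OF XC(1)[OF C ll(3)]] XC(1)[OF C ll(2)] n1]
      f_par[OF XC(1)[OF C ll(3)]] f_line offC[OF C ll(2)] offC[OF C ll(3)] by simp
  have n2: "\<not> parallel ll (par_through L (pp L Z U C A) (line_of L B C))"
    using XC[OF C B] par_through[OF XC(1)[OF C B], of "pp L Z U C A"] ll parallel_sym
    by (metis nonpar_trans parallel_refl)
  show ?thesis unfolding G_def
    using f_meet[OF ll(1) par_through(1)[OF XC(1)[OF C B]] n2] f_ll
      f_par[OF XC(1)[OF C B]] f_line offC[OF C B] e1 by simp
qed

end

context ln
begin

lemma inv_line: assumes C: "C \<notin> ll" and B: "B \<in> ll" "B \<noteq> Z" and Y: "Y \<in> ll" and g: "G L Z U C B Y = U"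
  shows "line_of L Y C = par_through L C (line_of L (pp L Z U C B) U)"
proof -
  define p where "p = pp L Z U C B"
  have pl: "p \<notin> ll" using pp_nZ[OF C B] p_def by auto
  then have pU: "p \<noteq> U" using ll by auto
  have "U \<in> par_through L p (line_of L Y C)" using G_mem(2)[OF C Y, of p] g
    unfolding G_def p_def by simp
  then have "par_through L p (line_of L Y C) = line_of L p U"
    using par_through[OF XC(1)[OF C Y], of p] pU by (intro line_of_eq[symmetric]) auto
  then have "parallel (line_of L p U) (line_of L Y C)"
    using par_through[OF XC(1)[OF C Y], of p] by simp
  then show ?thesis unfolding p_def[symmetric]
    using XC[OF C Y] line_of[OF pU] by (intro par_eq[symmetric]) (auto intro: parallel_sym)
qed

lemma inv_uniq: assumes C: "C \<notin> ll" and B: "B \<in> ll" "B \<noteq> Z" and Y: "Y \<in> ll" "Y' \<in> ll"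
  and g: "G L Z U C B Y = U" "G L Z U C B Y' = U"
  shows "Y = Y'"
proof -
  have "line_of L Y C = line_of L Y' C" using inv_line[OF C B Y(1) g(1)] inv_line[OF C B Y(2) g(2)] by simp
  then have "Y' \<in> line_of L Y C" using XC(2)[OF C Y(2)] by simp
  then show ?thesis using XC(6)[OF C Y(1) Y(2)] by simp
qed

definition yinv where "yinv C B = meet ll (par_through L C (line_of L (pp L Z U C B) U))"

lemma inv_ex: assumes C: "C \<notin> ll" and B: "B \<in> ll" "B \<noteq> Z"
  shows "yinv C B \<in> ll" "yinv C B \<noteq> Z" "G L Z U C B (yinv C B) = U"
    "pp L Z U C B \<notin> ll" "G L Z U (pp L Z U C B) (yinv C B) B = U"
proof -
  define p where "p = pp L Z U C B"
  define m where "m = par_through L C (line_of L p U)"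
  have pl: "p \<notin> ll" using pp_nZ[OF C B] p_def by auto
  then show "pp L Z U C B \<notin> ll" using p_def by simp
  have pU: "p \<noteq> U" using pl ll by auto
  note lpU = line_of[OF pU]
  note mm = par_through[OF lpU(1), of C]
  have n0: "\<not> parallel (line_of L p U) ll" using lpU pl ll by (intro nonpar_I[of _ _ U]) auto
  have n1: "\<not> parallel ll m" unfolding m_def using n0 lpU(1) ll(1)
    by (metis nonpar_par1 parallel_sym)
  have Y: "meet ll m \<in> ll" "meet ll m \<in> m" using nonpar_meet[OF ll(1) _ n1] mm(1) m_def by auto
  have yd: "yinv C B = meet ll m" unfolding yinv_def m_def p_def by simp
  show Yl: "yinv C B \<in> ll" using Y yd by simp
  have YC: "yinv C B \<noteq> C" using Yl C by auto
  have lYC: "line_of L (yinv C B) C = m" using Y yd mm YC m_def by (intro line_of_eq) auto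
  have pm: "par_through L p m = line_of L p U"
    using lpU mm m_def by (intro par_eq) (auto intro: parallel_sym)
  show "G L Z U C B (yinv C B) = U" unfolding G_def p_def[symmetric] lYC pm
    using lpU ll pl by (intro meet_eq) auto
  have pZC: "p \<in> line_of L Z C" "p \<noteq> Z" using pp[OF C B(1)] pp_nZ[OF C B] p_def by auto
  show YZ: "yinv C B \<noteq> Z"
  proof
    assume h: "yinv C B = Z"
    have "m = line_of L Z C" using lYC h by simp
    then have "parallel (line_of L p U) (line_of L Z C)" using mm m_def by (simp add: parallel_sym)
    then have "line_of L p U = line_of L Z C" using lpU pZC unfolding parallel_def by auto
    then have "U \<in> line_of L Z C" using lpU by simp
    then show False using XC(6)[OF C ll(2) ll(3)] ZU by simp
  qed
  have lZp: "line_of L Z p = line_of L Z C" using pZC XC(1,2)[OF C ll(2)]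
    by (intro line_of_eq) auto
  have parY: "par_through L (yinv C B) (line_of L U p) = m"
    using mm m_def Y yd lpU by (subst line_of_sym) (intro par_eq, auto intro: parallel_sym)
  have mZC: "m \<noteq> line_of L Z C" using XC(6)[OF C ll(2) Yl] XC(2)[OF C Yl] YZ lYC by auto
  have ppY: "pp L Z U p (yinv C B) = C" unfolding pp_def lZp parY
    using mm m_def mZC XC(1,3)[OF C ll(2)] by (intro meet_eq) auto
  have lBp: "line_of L B p = par_through L B (line_of L U C)" using pp_nZ(4)[OF C B] p_def by simp
  have pc: "par_through L C (line_of L B p) = line_of L U C" unfolding lBp
    using XC[OF C ll(3)] par_through[OF XC(1)[OF C ll(3)], of B]
    by (intro par_eq) (auto intro: parallel_sym)
  show "G L Z U (pp L Z U C B) (yinv C B) B = U" unfolding G_def p_def[symmetric] ppY pc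
    using XC[OF C ll(3)] ll by (intro meet_eq) auto
qed

end



locale dln = ln L Z U for L :: "'a set set" and Z U :: 'a +
  assumes da: "desargues_axiom L"
begin

lemma desarg: assumes "A \<noteq> A'" "B \<noteq> B'" "C \<noteq> C'" "A \<noteq> B" "B \<noteq> C" "A \<noteq> C"
  "A' \<noteq> B'" "B' \<noteq> C'" "A' \<noteq> C'"
  "line_of L A A' \<noteq> line_of L B B'" "line_of L B B' \<noteq> line_of L C C'"
  "line_of L A A' \<noteq> line_of L C C'"
  "P \<in> line_of L A A'" "P \<in> line_of L B B'" "P \<in> line_of L C C'"
  "parallel (line_of L A B) (line_of L A' B')"
  "parallel (line_of L B C) (line_of L B' C')"
  "line_of L A B \<noteq> line_of L A' B'" "line_of L B C \<noteq> line_of L B' C'"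
  shows "parallel (line_of L A C) (line_of L A' C')"
  apply (rule da[unfolded desargues_axiom_def, rule_format, of A A' B B' C C'])
  using assms by blast

lemma meet_ll: assumes C: "C \<notin> ll" and B: "B \<in> ll" and X: "X \<in> ll" "X \<in> par_through L Q (line_of L B C)"
  shows "meet ll (par_through L Q (line_of L B C)) = X"
proof -
  have n2: "\<not> parallel ll (par_through L Q (line_of L B C))"
    using XC[OF C B] par_through[OF XC(1)[OF C B], of Q] ll parallel_sym
    by (metis nonpar_trans parallel_refl)
  then show ?thesis using X ll(1) par_through(1)[OF XC(1)[OF C B]]
    by (intro meet_eq) (auto simp: parallel_def)
qed

lemma G_Z1: assumes C: "C \<notin> ll" and B: "B \<in> ll" shows "G L Z U C Z B = Z"
  unfolding G_def pp_Z[OF C] using meet_ll[OF C B ll(2)] par_through(2)[OF XC(1)[OF C B]] by simp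

lemma G_Z2: assumes C: "C \<notin> ll" and A: "A \<in> ll" shows "G L Z U C A Z = Z"
proof -
  have "par_through L (pp L Z U C A) (line_of L Z C) = line_of L Z C"
    using par_self XC(1)[OF C ll(2)] pp(2)[OF C A] by simp
  then show ?thesis unfolding G_def using meet_ll[OF C ll(2) ll(2), of "pp L Z U C A"] XC(2)[OF C ll(2)] by simp
qed

lemma G_U1: assumes C: "C \<notin> ll" and B: "B \<in> ll" shows "G L Z U C U B = B"
proof -
  have "par_through L C (line_of L B C) = line_of L B C"
    using par_self XC(1,3)[OF C B] by simp
  then show ?thesis unfolding G_def pp_U[OF C] using meet_ll[OF C B B, of C] XC(2)[OF C B] by simp
qed

lemma indep1: assumes C: "C \<notin> ll" and D: "D \<notin> ll" "D \<notin> line_of L Z C"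
  and A: "A \<in> ll" and B: "B \<in> ll"
  shows "G L Z U C A B = G L Z U D A B"
proof (cases "A = Z \<or> A = U \<or> B = Z")
  case True
  then show ?thesis using G_Z1[OF C B] G_Z1[OF D(1) B] G_Z2[OF C A] G_Z2[OF D(1) A]
    G_U1[OF C B] G_U1[OF D(1) B] by auto
next
  case False
  then have AZ: "A \<noteq> Z" and AU: "A \<noteq> U" and BZ: "B \<noteq> Z" by auto
  define P where "P = pp L Z U C A"
  define Q where "Q = pp L Z U D A"
  define X where "X = G L Z U C A B"
  have P1: "P \<in> line_of L Z C" "P \<noteq> Z" "P \<notin> ll" "A \<noteq> P" "line_of L A P = par_through L A (line_of L U C)"
    "P \<noteq> C" using pp(2)[OF C A] pp_nZ[OF C A AZ] pp_nU[OF C A AU] P_def by auto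
  have Q1: "Q \<in> line_of L Z D" "Q \<noteq> Z" "Q \<notin> ll" "A \<noteq> Q" "line_of L A Q = par_through L A (line_of L U D)"
    "Q \<noteq> D" using pp(2)[OF D(1) A] pp_nZ[OF D(1) A AZ] pp_nU[OF D(1) A AU] Q_def by auto
  note lZC = XC[OF C ll(2)]
  note lZD = XC[OF D(1) ll(2)]
  note lUC = XC[OF C ll(3)]
  note lUD = XC[OF D(1) ll(3)]
  have CD: "C \<noteq> D" using D lZC by auto
  have ZCZD: "line_of L Z C \<noteq> line_of L Z D" using D lZD by auto
  have PQ: "P \<noteq> Q"
  proof
    assume "P = Q"
    then have "line_of L Z C = line_of L Z D" using P1 Q1 lZC lZD by (intro lines_eq[of _ _ Z P]) auto
    then show False using ZCZD by simp
  qed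
  have lCP: "line_of L C P = line_of L Z C" using P1 lZC by (intro line_of_eq) auto
  have lDQ: "line_of L D Q = line_of L Z D" using Q1 lZD by (intro line_of_eq) auto
  have lUA: "line_of L U A = ll" using AU ll A by (intro line_of_eq) auto
  have AnUC: "A \<notin> line_of L U C" using lUC(6)[OF A] AU by auto
  have AnUD: "A \<notin> line_of L U D" using lUD(6)[OF A] AU by auto
  note pUC = par_through[OF lUC(1), of A]
  note pUD = par_through[OF lUD(1), of A]
  have s1: "parallel (line_of L C D) (line_of L P Q)"
    using desarg[of C P U A D Q Z] CD PQ P1 Q1 offC[OF C ll(3)] offC[OF D(1) ll(3)] AU[symmetric]
      lCP lDQ lUA lZC(4) lZD(4) ZCZD lZC(2) lZD(2) ll(2) pUC(3) pUD(3) pUC(2) pUD(2) AnUC AnUD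
    by (simp add: line_of_sym parallel_sym) metis
  note lBC = XC[OF C B]
  note lBD = XC[OF D(1) B]
  note pBC = par_through[OF lBC(1), of P]
  have X: "X \<in> ll" "X \<in> par_through L P (line_of L B C)"
    using G_mem[OF C B, of P] unfolding X_def G_def P_def by auto
  have PnBC: "P \<notin> line_of L B C"
  proof
    assume h: "P \<in> line_of L B C"
    then have "line_of L B C = line_of L Z C" using P1 lBC lZC by (intro lines_eq[of _ _ P C]) auto
    then show False using lBC(2) lZC(6)[OF B] BZ by auto
  qed
  have BX: "B \<noteq> X"
  proof
    assume "B = X"
    then have "par_through L P (line_of L B C) = line_of L B C"
      using X pBC lBC(2) unfolding parallel_def by auto
    then show False using PnBC pBC(2) by auto
  qed
  have PX: "P \<noteq> X" "Q \<noteq> X" using X P1 Q1 by auto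
  have lBX: "line_of L B X = ll" using BX B X ll by (intro line_of_eq) auto
  have lPX: "line_of L P X = par_through L P (line_of L B C)" using PX X pBC by (intro line_of_eq) auto
  have lDC: "line_of L D C \<noteq> line_of L Q P"
  proof
    assume h: "line_of L D C = line_of L Q P"
    have "P \<in> line_of L C D" using h line_of[OF PQ[symmetric]] by (simp add: line_of_sym)
    then have "line_of L C D = line_of L Z C" using P1 line_of[OF CD] lZC by (intro lines_eq[of _ _ C P]) auto
    then show False using D line_of[OF CD] by auto
  qed
  have CB: "C \<noteq> B" "D \<noteq> B" using C D B by auto
  have CBPX: "line_of L C B \<noteq> line_of L P X"
    using PnBC line_of[OF PX(1)] by (auto simp: line_of_sym)
  have s2: "parallel (line_of L D B) (line_of L Q X)"
    using desarg[of D Q C P B X Z] CD PQ P1 Q1 BX PX CB lCP lDQ lBX lZC(4) lZD(4) ZCZD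
      lZC(2) lZD(2) ll(2) s1 lDC CBPX lPX pBC(3)
    by (simp add: line_of_sym parallel_sym)
  have "line_of L Q X = par_through L Q (line_of L B D)"
    using s2 line_of[OF PX(2)] lBD by (intro par_eq[symmetric]) (auto simp: line_of_sym parallel_sym)
  then have "X \<in> par_through L Q (line_of L B D)" using line_of[OF PX(2)] by simp
  then have "meet ll (par_through L Q (line_of L B D)) = X" using meet_ll[OF D(1) B X(1)] by simp
  then show ?thesis unfolding X_def G_def Q_def by simp
qed

lemma indep: assumes C: "C \<notin> ll" and D: "D \<notin> ll" and A: "A \<in> ll" and B: "B \<in> ll"
  shows "G L Z U C A B = G L Z U D A B"
proof (cases "D \<in> line_of L Z C")
  case False
  then show ?thesis using indep1[OF C D False A B] by simp
next
  case True
  note lZC = XC[OF C ll(2)]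
  define E where "E = meet (par_through L U (line_of L Z C)) (par_through L C ll)"
  note p1 = par_through[OF lZC(1), of U]
  note p2 = par_through[OF ll(1), of C]
  have n: "\<not> parallel (par_through L U (line_of L Z C)) (par_through L C ll)"
    using nonpar_trans[OF lZC(1) ll(1) p1(1) p2(1) lZC(5) p1(3) p2(3)] .
  have E: "E \<in> par_through L U (line_of L Z C)" "E \<in> par_through L C ll"
    using nonpar_meet[OF p1(1) p2(1) n] E_def by auto
  have En: "E \<notin> ll"
  proof
    assume "E \<in> ll"
    then have "par_through L C ll = ll" using E p2 unfolding parallel_def by auto
    then show False using p2(2) C by simp
  qed
  have EZC: "E \<notin> line_of L Z C"
  proof
    assume "E \<in> line_of L Z C"
    then have "par_through L U (line_of L Z C) = line_of L Z C" using E p1 unfolding parallel_def by auto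
    then show False using p1(2) lZC(6)[OF ll(3)] ZU by auto
  qed
  have DZ: "D \<noteq> Z" using D ll by auto
  have EZ: "E \<noteq> Z" using En ll by auto
  have DZE: "D \<notin> line_of L Z E"
  proof
    assume h: "D \<in> line_of L Z E"
    have "line_of L Z E = line_of L Z C" using h True line_of[OF EZ[symmetric]] lZC DZ
      by (intro lines_eq[of _ _ Z D]) auto
    then show False using EZC line_of[OF EZ[symmetric]] by auto
  qed
  show ?thesis using indep1[OF C En EZC A B] indep1[OF En D DZE A B] by simp
qed

end



theorem mainTheorem10:
  fixes L :: "'a set set" and \<delta> :: "'a \<Rightarrow> 'a" and Oz Iu A B :: 'a
  assumes "desargues_affine_plane L"
    and "Oz \<noteq> Iu"
    and "dilatation L \<delta>"
    and "\<exists>F. \<delta> F = F"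
    and "A \<in> line_of L Oz Iu" and "B \<in> line_of L Oz Iu" and "B \<noteq> Oz"
  shows "\<delta> (ratio L Oz Iu A B) = ratio L (\<delta> Oz) (\<delta> Iu) (\<delta> A) (\<delta> B)"
proof -
  have ap: "affine_plane L" and da: "desargues_axiom L" using assms(1) unfolding desargues_affine_plane_def by auto
  have co: "collineation L \<delta>" using assms(3) unfolding dilatation_def by auto
  interpret D1: dln L Oz Iu using ap da assms(2) by unfold_locales
  interpret F: lncol L Oz Iu \<delta> using ap da assms(2) co by unfold_locales
  interpret D2: dln L "\<delta> Oz" "\<delta> Iu" using ap da F.fZU by unfold_locales
  define l where "l = line_of L Oz Iu"
  define l' where "l' = line_of L (\<delta> Oz) (\<delta> Iu)"
  have l'l: "l' = \<delta> ` l" using F.f_ll l_def l'_def by simp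
  define C where "C = aux_pt L Oz Iu"
  define C' where "C' = aux_pt L (\<delta> Oz) (\<delta> Iu)"
  have C: "C \<notin> l" unfolding C_def aux_pt_def l_def
    using someI_ex[OF D1.off_line_ex[OF D1.ll(1)]] .
  have C': "C' \<notin> l'" unfolding C'_def aux_pt_def l'_def
    using someI_ex[OF D1.off_line_ex[OF D2.ll(1)]] .
  have dC: "\<delta> C \<notin> l'" using C l'l F.injf by (auto dest: injD)
  have dl: "X \<in> l \<Longrightarrow> \<delta> X \<in> l'" for X using l'l by auto
  have m1: "sf_mult L Oz Iu X Y = G L Oz Iu C X Y" for X Y unfolding sf_mult_G C_def ..
  have m2: "sf_mult L (\<delta> Oz) (\<delta> Iu) X Y = G L (\<delta> Oz) (\<delta> Iu) C' X Y" for X Y unfolding sf_mult_G C'_def ..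
  have key: "\<delta> (sf_mult L Oz Iu X Y) = sf_mult L (\<delta> Oz) (\<delta> Iu) (\<delta> X) (\<delta> Y)"
    if "X \<in> l" "Y \<in> l" for X Y
    unfolding m1 m2 using F.f_G[OF C[unfolded l_def] that[unfolded l_def]]
      D2.indep[OF dC[unfolded l'_def] C'[unfolded l'_def] dl[OF that(1), unfolded l'_def] dl[OF that(2), unfolded l'_def]]
    by simp
  define Y0 where "Y0 = D1.yinv C B"
  note ie = D1.inv_ex[OF C[unfolded l_def] assms(6,7)]
  have Y0: "Y0 \<in> l" "sf_mult L Oz Iu B Y0 = Iu" "sf_mult L Oz Iu Y0 B = Iu"
    using ie D1.indep[OF C[unfolded l_def] ie(4) ie(1) assms(6)] unfolding Y0_def l_def m1 by auto
  have inv1: "sf_inv L Oz Iu B = Y0" unfolding sf_inv_def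
  proof (rule the_equality)
    show "Y0 \<in> line_of L Oz Iu \<and> sf_mult L Oz Iu B Y0 = Iu \<and> sf_mult L Oz Iu Y0 B = Iu" using Y0 l_def by simp
    fix Y assume "Y \<in> line_of L Oz Iu \<and> sf_mult L Oz Iu B Y = Iu \<and> sf_mult L Oz Iu Y B = Iu"
    then show "Y = Y0" using D1.inv_uniq[OF C[unfolded l_def] assms(6,7)] Y0 unfolding m1 l_def by blast
  qed
  have dB: "\<delta> B \<in> l'" "\<delta> B \<noteq> \<delta> Oz" using dl[OF assms(6)[folded l_def]] assms(7) F.injf by (auto dest: injD)
  have inv2: "sf_inv L (\<delta> Oz) (\<delta> Iu) (\<delta> B) = \<delta> Y0" unfolding sf_inv_def
  proof (rule the_equality)
    show "\<delta> Y0 \<in> line_of L (\<delta> Oz) (\<delta> Iu) \<and> sf_mult L (\<delta> Oz) (\<delta> Iu) (\<delta> B) (\<delta> Y0) = \<delta> Iu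
        \<and> sf_mult L (\<delta> Oz) (\<delta> Iu) (\<delta> Y0) (\<delta> B) = \<delta> Iu"
      using Y0 dl key[OF assms(6)[folded l_def] Y0(1)] key[OF Y0(1) assms(6)[folded l_def]] l'_def by simp
    fix Y assume "Y \<in> line_of L (\<delta> Oz) (\<delta> Iu) \<and> sf_mult L (\<delta> Oz) (\<delta> Iu) (\<delta> B) Y = \<delta> Iu
        \<and> sf_mult L (\<delta> Oz) (\<delta> Iu) Y (\<delta> B) = \<delta> Iu"
    moreover have "sf_mult L (\<delta> Oz) (\<delta> Iu) (\<delta> B) (\<delta> Y0) = \<delta> Iu"
      using Y0 key[OF assms(6)[folded l_def] Y0(1)] by simp
    ultimately show "Y = \<delta> Y0" using D2.inv_uniq[OF C'[unfolded l'_def] dB[unfolded l'_def]] dl[OF Y0(1)]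
      unfolding m2 l'_def by blast
  qed
  show ?thesis unfolding ratio_def inv1 inv2 using key[OF Y0(1) assms(5)[folded l_def]] .
qed



end
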